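(* Let $\mathbf{F}_q$ have characteristic $p$, and let $D\subseteq\mathbf{F}_q$ with $|D|=q-1>4$. If $p$ is odd, then for every integer $k$ with $1<k<q-2$ and every $b\in\mathbf{F}_q$ there exist pairwise distinct $x_1,\dots,x_k\in D$ with $x_1+\dots+x_k=b$. If $p=2$, the same holds for every integer $k$ with $2<k<q-3$. *)

theory Defs
  imports Main "HOL-Library.Cardinality"
begin

end

theory Submission
  imports Defs
begin

lemma sum_univ_zero:
  assumes "CARD('a::{finite,field}) > 2"
  shows "(\<Sum>x\<in>(UNIV::'a set). x) = 0"
proof -
  have "\<not> (UNIV::'a set) \<subseteq> {0,1}"
  proof
    assume "(UNIV::'a set) \<subseteq> {0,1}"
    then have "card (UNIV::'a set) \<le> card {0::'a,1}" by (intro card_mono) auto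
    also have "\<dots> \<le> 2" by (simp add: card_insert_le_m1)
    finally show False using assms by simp
  qed
  then obtain c :: 'a where c: "c \<noteq> 0" "c \<noteq> 1" by blast
  have "(\<Sum>x\<in>(UNIV::'a set). c * x) = (\<Sum>x\<in>(UNIV::'a set). x)"
    by (rule sum.reindex_bij_witness[of _ "\<lambda>x. x / c" "\<lambda>x. c * x"]) (use c in auto)
  then have "c * (\<Sum>x\<in>(UNIV::'a set). x) = 1 * (\<Sum>x\<in>(UNIV::'a set). x)"
    by (simp add: sum_distrib_left)
  then have "(c - 1) * (\<Sum>x\<in>(UNIV::'a set). x) = 0" by (simp add: algebra_simps)
  then show ?thesis using c by simp
qed

lemma add_step:
  fixes S :: "'a::{finite,field} set"
  assumes "0 \<notin> S" "card S = k" "(\<Sum>x\<in>S. x) = 0" "1 \<le> k" "2*k+1 < CARD('a)"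
  shows "\<exists>T::'a set. 0 \<notin> T \<and> card T = k+1 \<and> (\<Sum>x\<in>T. x) = 0"
proof -
  have fin: "finite S" by simp
  from assms have "S \<noteq> {}" by auto
  then obtain x where x: "x \<in> S" by blast
  define B where "B = S \<union> (\<lambda>s. x - s) ` S \<union> {x/2}"
  have "card B \<le> card S + card ((\<lambda>s. x - s) ` S) + card {x/2}"
    unfolding B_def by (meson card_Un_le add_le_mono order_trans le_refl)
  also have "\<dots> \<le> k + k + 1" using assms(2) card_image_le[OF fin, of "\<lambda>s. x - s"] by simp
  finally have "card B < CARD('a)" using assms by simp
  then have "B \<noteq> UNIV" by auto
  then obtain y where y: "y \<notin> B" by blast
  have y0: "y \<noteq> 0" using y x unfolding B_def by force
  have yS: "y \<notin> S" using y unfolding B_def by auto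
  have xyS: "x - y \<notin> S"
  proof
    assume "x - y \<in> S"
    then have "x - (x - y) \<in> (\<lambda>s. x - s) ` S" by blast
    then show False using y unfolding B_def by auto
  qed
  have xy0: "x - y \<noteq> 0" using yS x by auto
  have yxy: "y \<noteq> x - y"
  proof
    assume "y = x - y"
    then have e: "2 * y = x" by (simp add: algebra_simps mult_2)
    show False
    proof (cases "(2::'a) = 0")
      case True then show False using e x assms(1) by simp
    next
      case False then have "y = x / 2" using e by (simp add: field_simps)
      then show False using y unfolding B_def by auto
    qed
  qed
  define T where "T = insert y (insert (x - y) (S - {x}))"
  have "0 \<notin> T" using y0 xy0 assms(1) unfolding T_def by auto
  moreover have "card T = k + 1"
  proof -
    have "card (S - {x}) = k - 1" using x assms(2) by simp
    then show ?thesis unfolding T_def using yS xyS yxy assms(4) by (simp)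
  qed
  moreover have "(\<Sum>x\<in>T. x) = 0"
  proof -
    have "(\<Sum>z\<in>T. z) = y + ((x - y) + (\<Sum>z\<in>S - {x}. z))"
      unfolding T_def using yS xyS yxy by simp
    also have "(\<Sum>z\<in>S - {x}. z) = (\<Sum>z\<in>S. z) - x" using x by (simp add: sum_diff1)
    finally show ?thesis using assms(3) by simp
  qed
  ultimately show ?thesis by blast
qed

lemma up:
  fixes S :: "'a::{finite,field} set"
  assumes "0 \<notin> S" "card S = k0" "(\<Sum>x\<in>S. x) = 0" "1 \<le> k0"
  shows "k0 \<le> k \<Longrightarrow> 2*k \<le> CARD('a) \<Longrightarrow> \<exists>T::'a set. 0 \<notin> T \<and> card T = k \<and> (\<Sum>x\<in>T. x) = 0"
proof (induction k rule: dec_induct)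
  case base then show ?case using assms by blast
next
  case (step n)
  then obtain T :: "'a set" where "0 \<notin> T" "card T = n" "(\<Sum>x\<in>T. x) = 0" by auto
  then show ?case using add_step[of T n] step assms(4) by simp
qed

lemma compl:
  fixes S :: "'a::{finite,field} set"
  assumes "0 \<notin> S" "card S = k" "(\<Sum>x\<in>S. x) = 0" "CARD('a) > 2"
  shows "\<exists>T::'a set. 0 \<notin> T \<and> card T = CARD('a) - 1 - k \<and> (\<Sum>x\<in>T. x) = 0"
proof -
  define T where "T = UNIV - insert 0 S"
  have "card T = CARD('a) - card (insert 0 S)" unfolding T_def
    by (rule card_Diff_subset) auto
  also have "card (insert 0 S) = k + 1" using assms by simp
  finally have c: "card T = CARD('a) - 1 - k" by simp
  have "(\<Sum>x\<in>T. x) = (\<Sum>x\<in>UNIV. x) - (\<Sum>x\<in>insert 0 S. x)" unfolding T_def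
    by (rule sum_diff) auto
  also have "(\<Sum>x\<in>insert 0 S. x) = (\<Sum>x\<in>S. x)"
    using assms(1) by (simp add: sum.insert_if)
  also have "(\<Sum>x\<in>(UNIV::'a set). x) = 0" by (rule sum_univ_zero[OF assms(4)])
  finally have s: "(\<Sum>x\<in>T. x) = 0 - (\<Sum>x\<in>S. x)" .
  have "(\<Sum>x\<in>T. x) = 0" unfolding s assms(3) by simp
  moreover have "0 \<notin> T" unfolding T_def by simp
  ultimately show ?thesis using c by blast
qed

lemma zero_range:
  fixes S :: "'a::{finite,field} set"
  assumes "0 \<notin> S" "card S = k0" "(\<Sum>x\<in>S. x) = 0" "1 \<le> k0" "CARD('a) > 2"
    and "k0 \<le> k" "k \<le> CARD('a) - 1 - k0"
  shows "\<exists>T::'a set. 0 \<notin> T \<and> card T = k \<and> (\<Sum>x\<in>T. x) = 0"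
proof (cases "2*k \<le> CARD('a)")
  case True then show ?thesis using up[OF assms(1-4) assms(6) True] by blast
next
  case False
  define j where "j = CARD('a) - 1 - k"
  have "k0 \<le> j" "2*j \<le> CARD('a)" using False assms unfolding j_def by auto
  then obtain T :: "'a set" where "0 \<notin> T" "card T = j" "(\<Sum>x\<in>T. x) = 0"
    using up[OF assms(1-4), of j] by blast
  from compl[OF this assms(5)] obtain U :: "'a set" where
    "0 \<notin> U" "card U = CARD('a) - 1 - j" "(\<Sum>x\<in>U. x) = 0" by blast
  moreover have "CARD('a) - 1 - j = k" using False assms unfolding j_def by auto
  ultimately show ?thesis by auto
qed

lemma all_sums:
  fixes S :: "'a::{finite,field} set"
  assumes "0 \<notin> S" "card S = k" "(\<Sum>x\<in>S. x) = 0" "1 \<le> k" "k < CARD('a) - 1"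
  shows "\<exists>T::'a set. 0 \<notin> T \<and> card T = k \<and> (\<Sum>x\<in>T. x) = c"
proof (cases "c = 0")
  case True then show ?thesis using assms by blast
next
  case False
  from assms have "S \<noteq> {}" by auto
  then obtain x where x: "x \<in> S" by blast
  have "card (UNIV - {0::'a}) = CARD('a) - 1" by (rule card_Diff_singleton) simp
  then have "card S < card (UNIV - {0::'a})" using assms(2,5) by simp
  then have "\<not> UNIV - {0} \<subseteq> S" by (meson card_mono finite leD)
  then obtain y where y: "y \<noteq> 0" "y \<notin> S" by blast
  define S' where "S' = insert y (S - {x})"
  have S'0: "0 \<notin> S'" using y assms unfolding S'_def by auto
  have cS': "card S' = k" using x y assms unfolding S'_def by simp
  have "(\<Sum>z\<in>S'. z) = y + ((\<Sum>z\<in>S. z) - x)" unfolding S'_def using y x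
    by (simp add: sum_diff1)
  then have sS': "(\<Sum>z\<in>S'. z) = y - x" using assms by simp
  have s0: "y - x \<noteq> 0" using x y by auto
  define a where "a = c / (y - x)"
  have a0: "a \<noteq> 0" using False s0 unfolding a_def by simp
  define T where "T = (\<lambda>z. a * z) ` S'"
  have inj: "inj_on (\<lambda>z. a * z) S'" using a0 by (auto simp: inj_on_def)
  have "0 \<notin> T" using S'0 a0 unfolding T_def by auto
  moreover have "card T = k" using card_image[OF inj] cS' unfolding T_def by simp
  moreover have "(\<Sum>z\<in>T. z) = c"
  proof -
    have "(\<Sum>z\<in>T. z) = (\<Sum>z\<in>S'. a * z)"
      unfolding T_def using sum.reindex[OF inj, of "\<lambda>z. z"] by simp
    also have "\<dots> = a * (y - x)" by (simp add: sum_distrib_left[symmetric] sS')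
    finally show ?thesis using s0 by (simp add: a_def)
  qed
  ultimately show ?thesis by blast
qed

lemma main_sets:
  fixes D :: "'a::{finite,field} set" and S :: "'a set"
  assumes "card D = CARD('a) - 1" "CARD('a) > 2"
    and "0 \<notin> S" "card S = k0" "(\<Sum>x\<in>S. x) = 0" "1 \<le> k0"
    and "k0 \<le> k" "k \<le> CARD('a) - 1 - k0"
  shows "\<exists>xs :: 'a list. length xs = k \<and> distinct xs \<and> set xs \<subseteq> D \<and> sum_list xs = b"
proof -
  have "D \<noteq> UNIV"
  proof
    assume "D = UNIV"
    then show False using assms(1,2) by simp
  qed
  then obtain d where d: "d \<notin> D" by blast
  have "card (UNIV - {d}) = CARD('a) - 1" by (rule card_Diff_singleton) simp
  then have "card (UNIV - {d}) = card D" using assms(1) by simp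
  moreover have "D \<subseteq> UNIV - {d}" using d by auto
  ultimately have Dd: "D = UNIV - {d}" using card_subset_eq[of "UNIV - {d}" D] by simp
  obtain S0 :: "'a set" where "0 \<notin> S0" "card S0 = k" "(\<Sum>x\<in>S0. x) = 0"
    using zero_range[OF assms(3-6) assms(2) assms(7,8)] by blast
  then have "\<exists>T :: 'a set. 0 \<notin> T \<and> card T = k \<and> (\<Sum>x\<in>T. x) = b - of_nat k * d"
  proof -
    have "1 \<le> k" "k < CARD('a) - 1" using assms by auto
    from all_sums[OF \<open>0 \<notin> S0\<close> \<open>card S0 = k\<close> \<open>(\<Sum>x\<in>S0. x) = 0\<close> this]
    show ?thesis by blast
  qed
  then obtain T :: "'a set" where T: "0 \<notin> T" "card T = k" "(\<Sum>x\<in>T. x) = b - of_nat k * d"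
    by blast
  define U where "U = (\<lambda>z. z + d) ` T"
  have inj: "inj_on (\<lambda>z. z + d) T" by (auto simp: inj_on_def)
  have UD: "U \<subseteq> D" unfolding U_def Dd using T by auto
  have cU: "card U = k" unfolding U_def using card_image[OF inj] T by simp
  have sU: "(\<Sum>z\<in>U. z) = b" unfolding U_def using sum.reindex[OF inj, of "\<lambda>z. z"] T
    by (simp add: sum.distrib)
  obtain xs where xs: "set xs = U" "distinct xs" using finite_distinct_list[of U] by auto
  have "length xs = k" using distinct_card[OF xs(2)] xs cU by simp
  moreover have "sum_list xs = b" using sum_list_distinct_conv_sum_set[OF xs(2), of "\<lambda>z. z"] xs sU by simp
  ultimately show ?thesis using xs UD by blast
qed

theorem corollary2p8:
  fixes D :: "'a::{finite,field} set"
    and p q :: nat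
  assumes "q = CARD('a)"
    and "p = CHAR('a)"
    and "card D = q - 1"
    and "q - 1 > 4"
  shows "(odd p \<longrightarrow>
           (\<forall>(k::nat) b. 1 < k \<and> k < q - 2 \<longrightarrow>
              (\<exists>xs :: 'a list. length xs = k \<and> distinct xs \<and> set xs \<subseteq> D
                  \<and> sum_list xs = b)))
       \<and> (p = 2 \<longrightarrow>
           (\<forall>(k::nat) b. 2 < k \<and> k < q - 3 \<longrightarrow>
              (\<exists>xs :: 'a list. length xs = k \<and> distinct xs \<and> set xs \<subseteq> D
                  \<and> sum_list xs = b)))"
proof (intro conjI impI allI)
  fix k b
  assume op: "odd p" and k: "1 < k \<and> k < q - 2"
  have two: "(2::'a) \<noteq> 0"
  proof
    assume "(2::'a) = 0"
    then have "(of_nat 2::'a) = 0" by simp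
    have "CHAR('a) dvd 2" by (rule of_nat_eq_0_iff_char_dvd[THEN iffD1]) fact
    then have d2: "p dvd 2" using assms(2) by simp
    have "CHAR('a) \<noteq> 1"
    proof
      assume "CHAR('a) = 1"
      then have "CHAR('a) dvd 1" by simp
      then have "(of_nat 1::'a) = 0" by (rule of_nat_eq_0_iff_char_dvd[THEN iffD2])
      then show False by simp
    qed
    then have "p \<noteq> 1" using assms(2) by simp
    moreover have "p \<noteq> 0" using d2 by (rule_tac notI) simp
    moreover have "p \<le> 2" using d2 by (rule dvd_imp_le) simp
    ultimately have "p = 2" by linarith
    then show False using op by auto
  qed
  have ne: "(1::'a) \<noteq> -1"
  proof
    assume "(1::'a) = -1"
    then have "(1::'a) + 1 = 0" using eq_neg_iff_add_eq_0[of "1::'a" 1] by blast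
    then show False using two by simp
  qed
  let ?S = "{1::'a, -1}"
  have "0 \<notin> ?S" "card ?S = 2" "(\<Sum>x\<in>?S. x) = 0" using ne by auto
  moreover have "card D = CARD('a) - 1" "CARD('a) > 2" "(1::nat) \<le> 2" "2 \<le> k"
    "k \<le> CARD('a) - 1 - 2" using assms(1,3,4) k by auto
  ultimately show "\<exists>xs :: 'a list. length xs = k \<and> distinct xs \<and> set xs \<subseteq> D
                  \<and> sum_list xs = b" using main_sets[of D ?S 2 k b] by blast
next
  fix k b
  assume p2: "p = 2" and k: "2 < k \<and> k < q - 3"
  have two: "(2::'a) = 0"
  proof -
    have "CHAR('a) dvd 2" using assms(2) p2 by simp
    then have "(of_nat 2::'a) = 0" by (simp only: of_nat_eq_0_iff_char_dvd)
    then show ?thesis by simp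
  qed
  have "\<not> (UNIV::'a set) \<subseteq> {0,1}"
  proof
    assume "(UNIV::'a set) \<subseteq> {0,1}"
    then have "card (UNIV::'a set) \<le> card {0::'a,1}" by (intro card_mono) auto
    also have "\<dots> \<le> 2" by (simp add: card_insert_le_m1)
    finally show False using assms by simp
  qed
  then obtain c :: 'a where c: "c \<noteq> 0" "c \<noteq> 1" by blast
  have neg: "\<And>z::'a. z + z = 0"
  proof -
    fix z :: 'a
    have "z + z = 2 * z" by (rule mult_2[symmetric])
    also have "\<dots> = 0" by (simp only: two mult_zero_left)
    finally show "z + z = 0" .
  qed
  have c1: "1 + c \<noteq> 0"
  proof
    assume h: "1 + c = 0"
    have "c = (1 + c) - 1" by simp
    also have "\<dots> = - 1" using h by simp
    also have "(-1::'a) = 1" using neg[of 1] by (simp add: eq_neg_iff_add_eq_0)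
    finally show False using c by simp
  qed
  have c2: "1 + c \<noteq> c" by simp
  have c3: "1 + c \<noteq> 1" using c by simp
  let ?S = "{1::'a, c, 1 + c}"
  have "0 \<notin> ?S" using c c1 by auto
  moreover have "card ?S = 3" using c c2 c3 by auto
  moreover have "(\<Sum>x\<in>?S. x) = 0"
  proof -
    have "(\<Sum>x\<in>?S. x) = 1 + (c + (1 + c))" using c c2 c3 by simp
    also have "\<dots> = (1 + c) + (1 + c)" by (simp add: algebra_simps)
    finally show ?thesis using neg by simp
  qed
  moreover have "card D = CARD('a) - 1" "CARD('a) > 2" "(1::nat) \<le> 3" "3 \<le> k"
    "k \<le> CARD('a) - 1 - 3" using assms(1,3,4) k by auto
  ultimately show "\<exists>xs :: 'a list. length xs = k \<and> distinct xs \<and> set xs \<subseteq> D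
                  \<and> sum_list xs = b" using main_sets[of D ?S 3 k b] by blast
qed

end
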